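(* In the setting described in the context, choose an initial point $x_0$, target accuracy $0<\epsilon<\min\{f(x_0)-f^*,2\mathcal{R}_{LP^{-1}}^2(x_0)\}$, confidence $0<\rho<1$, and $k$ satisfying either $$k\geq\frac{2\mathcal{R}^2_{LP^{-1}}(x_0)}{\epsilon}\left(1+\log\frac1\rho\right)+2-\frac{2\mathcal{R}^2_{LP^{-1}}(x_0)}{f(x_0)-f^*}$$ or $$k\geq\frac{2\mathcal{R}^2_{LP^{-1}}(x_0)}{\epsilon}\left(1+\log\frac1\rho\right)-2.$$ If $x_k$ is the random point generated by RCDS$(p,x_0)$ applied to the convex function $f$, then $\mathbf{P}(f(x_k)-f^*\leq\epsilon)\geq1-\rho$.
   Context: Let $U\in\mathbf{R}^{N\times N}$ be a column permutation of the $N\times N$ identity matrix, partitioned as $U=[U_1,\dots,U_n]$ with $U_i\in\mathbf{R}^{N\times N_i}$, $\sum_iN_i=N$; for $x\in\mathbf{R}^N$ write $x^{(i)}=U_i^Tx$, so $x=\sum_iU_ix^{(i)}$. Each $\mathbf{R}^{N_i}$ carries an arbitrary norm $\|\cdot\|_{(i)}$ with dual norm $\|s\|_{(i)}^*=\max_{\|t\|_{(i)}=1}\langle s,t\rangle$. Let $f:\mathbf{R}^N\to\mathbf{R}$ be convex and differentiable with $\|\nabla_if(x+U_it)-\nabla_if(x)\|_{(i)}^*\leq L_i\|t\|_{(i)}$ for all $x\in\mathbf{R}^N$, $t\in\mathbf{R}^{N_i}$, $i$, where $L_i>0$ and $\nabla_if(x)=U_i^T\nabla f(x)$; assume $f$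 attains its minimum $f^*$, with set of minimizers $X^*$. Let $p=(p_1,\dots,p_n)$ be a probability vector with all $p_i>0$, $L=\mathrm{Diag}(L_1,\dots,L_n)$, $P=\mathrm{Diag}(p_1,\dots,p_n)$, and for $W=\mathrm{Diag}(w_1,\dots,w_n)$ with $w_i>0$ let $\|x\|_W=(\sum_iw_i\|x^{(i)}\|_{(i)}^2)^{1/2}$; in particular $\|x\|_{LP^{-1}}=(\sum_i\frac{L_i}{p_i}\|x^{(i)}\|_{(i)}^2)^{1/2}$. Let $\mathcal{R}_W(x)=\max_y\max_{x^*\in X^*}\{\|y-x^*\|_W: f(y)\leq f(x)\}$, and $\mathcal{R}^2_W$ its square. For $s\in\mathbf{R}^{N_i}$, $s^\#$ denotes an optimal solution of $\min_{t\in\mathbf{R}^{N_i}}\{-\langle s,t\rangle+\frac12\|t\|_{(i)}^2\}$. Algorithm RCDS$(p,x_0)$: for $k=0,1,2,\dots$, choose $i\in\{1,\dots,n\}$ with probability $p_i$ (independently), and set $x_{k+1}=x_k-\frac1{L_i}U_i(\nabla_if(x_k))^\#$. *)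

theory Defs
  imports "HOL-Analysis.Analysis" "HOL-Probability.Probability_Mass_Function"
begin

text \<open>The permutation U = [U_1,...,U_n] of the identity is encoded by
  a map blk assigning to every coordinate j of R^N its block index blk j (blocks are
  indexed 0..n-1). The block space R^{N_i} is identified (via U_i) with the subspace
  block_space blk i of vectors supported on block i; x^(i) corresponds to
  block_proj blk i x = U_i U_i^T x, and U_i^T U_i-inner products coincide with
  the inner product of R^N on these subspaces.\<close>

definition block_space :: "('N::finite \<Rightarrow> nat) \<Rightarrow> nat \<Rightarrow> (real^'N) set" where
  "block_space blk i = {t. \<forall>j. blk j \<noteq> i \<longrightarrow> t $ j = 0}"

definition block_proj :: "('N::finite \<Rightarrow> nat) \<Rightarrow> nat \<Rightarrow> real^'N \<Rightarrow> real^'N" where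
  "block_proj blk i x = (\<chi> j. if blk j = i then x $ j else 0)"

definition is_norm_on :: "(real^'N::finite) set \<Rightarrow> (real^'N \<Rightarrow> real) \<Rightarrow> bool" where
  "is_norm_on B nrm \<longleftrightarrow>
     (\<forall>t\<in>B. 0 \<le> nrm t) \<and>
     (\<forall>t\<in>B. nrm t = 0 \<longleftrightarrow> t = 0) \<and>
     (\<forall>t\<in>B. \<forall>c. nrm (c *\<^sub>R t) = \<bar>c\<bar> * nrm t) \<and>
     (\<forall>t\<in>B. \<forall>u\<in>B. nrm (t + u) \<le> nrm t + nrm u)"

definition dual_norm :: "(real^'N::finite) set \<Rightarrow> (real^'N \<Rightarrow> real) \<Rightarrow> real^'N \<Rightarrow> real" where
  "dual_norm B nrm s = Sup {s \<bullet> t | t. t \<in> B \<and> nrm t = 1}"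

definition wnorm :: "nat \<Rightarrow> ('N::finite \<Rightarrow> nat) \<Rightarrow> (nat \<Rightarrow> real^'N \<Rightarrow> real) \<Rightarrow> (nat \<Rightarrow> real)
    \<Rightarrow> real^'N \<Rightarrow> real" where
  "wnorm n blk nrm w x = sqrt (\<Sum>i<n. w i * (nrm i (block_proj blk i x))\<^sup>2)"

definition level_radius :: "nat \<Rightarrow> ('N::finite \<Rightarrow> nat) \<Rightarrow> (nat \<Rightarrow> real^'N \<Rightarrow> real) \<Rightarrow> (nat \<Rightarrow> real)
    \<Rightarrow> (real^'N \<Rightarrow> real) \<Rightarrow> real^'N \<Rightarrow> real" where
  "level_radius n blk nrm w f x =
     Sup {wnorm n blk nrm w (y - xs) | y xs. f y \<le> f x \<and> (\<forall>z. f xs \<le> f z)}"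

definition rcds_step :: "('N::finite \<Rightarrow> nat) \<Rightarrow> (nat \<Rightarrow> real) \<Rightarrow> (nat \<Rightarrow> real^'N \<Rightarrow> real^'N)
    \<Rightarrow> (real^'N \<Rightarrow> real^'N) \<Rightarrow> nat \<Rightarrow> real^'N \<Rightarrow> real^'N" where
  "rcds_step blk L sharp grad i x = x - (1 / L i) *\<^sub>R sharp i (block_proj blk i (grad x))"

text \<open>Distribution of x_k generated by RCDS(p, x_0): the block index is drawn
  independently at each iteration from the distribution I (p_i = pmf I i).\<close>
fun rcds :: "('N::finite \<Rightarrow> nat) \<Rightarrow> (nat \<Rightarrow> real) \<Rightarrow> (nat \<Rightarrow> real^'N \<Rightarrow> real^'N)
    \<Rightarrow> (real^'N \<Rightarrow> real^'N) \<Rightarrow> nat pmf \<Rightarrow> real^'N \<Rightarrow> nat \<Rightarrow> (real^'N) pmf" where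
  "rcds blk L sharp grad I x0 0 = return_pmf x0"
| "rcds blk L sharp grad I x0 (Suc k) =
     bind_pmf (rcds blk L sharp grad I x0 k)
       (\<lambda>x. map_pmf (\<lambda>i. rcds_step blk L sharp grad i x) I)"

end

theory Submission
  imports Defs
begin

lemma block_proj_in: "block_proj blk i x \<in> block_space blk i"
  by (simp add: block_proj_def block_space_def)

lemma subspace_block: "subspace (block_space blk i)"
  unfolding subspace_def block_space_def by auto

lemma zero_in_block: "0 \<in> block_space blk i"
  by (simp add: block_space_def)

lemma inner_proj:
  assumes "t \<in> block_space blk i"
  shows "block_proj blk i g \<bullet> t = g \<bullet> t"
proof -
  have "\<And>j. (if blk j = i then g $ j else 0) * t $ j = g $ j * t $ j"
    using assms by (auto simp: block_space_def)
  then show ?thesis unfolding inner_vec_def block_proj_def by (intro sum.cong) auto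
qed

lemma sum_proj:
  assumes "\<forall>j. blk j < n"
  shows "(\<Sum>i<n. block_proj blk i x) = x"
proof (rule vec_eq_iff[THEN iffD2], rule allI)
  fix j
  have "(\<Sum>i<n. block_proj blk i x) $ j = (\<Sum>i<n. if blk j = i then x $ j else 0)"
    by (simp add: block_proj_def sum_component)
  also have "\<dots> = x $ j" using assms by (simp add: sum.delta')
  finally show "(\<Sum>i<n. block_proj blk i x) $ j = x $ j" .
qed

lemma inner_split:
  assumes "\<forall>j. blk j < n"
  shows "g \<bullet> h = (\<Sum>i<n. block_proj blk i g \<bullet> block_proj blk i h)"
proof -
  have "g \<bullet> h = g \<bullet> (\<Sum>i<n. block_proj blk i h)" using sum_proj[OF assms] by simp
  also have "\<dots> = (\<Sum>i<n. g \<bullet> block_proj blk i h)" by (simp add: inner_sum_right)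
  also have "\<dots> = (\<Sum>i<n. block_proj blk i g \<bullet> block_proj blk i h)"
    by (intro sum.cong refl) (metis inner_proj block_proj_in inner_commute)
  finally show ?thesis .
qed

lemma nrm_zero:
  assumes "is_norm_on (block_space blk i) nrm"
  shows "nrm 0 = 0"
  using assms zero_in_block unfolding is_norm_on_def by blast

lemma nrm_sum:
  assumes "is_norm_on (block_space blk i) nrm" "finite F" "\<forall>j\<in>F. v j \<in> block_space blk i"
  shows "nrm (sum v F) \<le> (\<Sum>j\<in>F. nrm (v j))"
  using assms(2,3)
proof (induction F rule: finite_induct)
  case empty then show ?case using nrm_zero[OF assms(1)] by simp
next
  case (insert x F)
  have "sum v F \<in> block_space blk i"
    using insert subspace_block by (intro subspace_sum) auto
  then have "nrm (v x + sum v F) \<le> nrm (v x) + nrm (sum v F)"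
    using assms(1) insert unfolding is_norm_on_def by auto
  then show ?case using insert by simp
qed

lemma nrm_upper:
  assumes "is_norm_on (block_space blk i) nrm"
  shows "\<exists>C\<ge>0. \<forall>t\<in>block_space blk i. nrm t \<le> C * norm t"
proof -
  define c where "c j = (if blk j = i then nrm (axis j (1::real)) else 0)" for j
  have c0: "c j \<ge> 0" for j
    using assms by (auto simp: c_def is_norm_on_def block_space_def axis_def)
  have "nrm t \<le> (\<Sum>j\<in>UNIV. c j) * norm t" if t: "t \<in> block_space blk i" for t
  proof -
    have mem: "\<forall>j\<in>UNIV. (t $ j) *\<^sub>R axis j (1::real) \<in> block_space blk i"
      using t by (auto simp: block_space_def axis_def)
    have "t = (\<Sum>j\<in>UNIV. (t $ j) *\<^sub>R axis j (1::real))"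
      using basis_expansion[of t] by (simp add: scalar_mult_eq_scaleR)
    then have "nrm t \<le> (\<Sum>j\<in>UNIV. nrm ((t $ j) *\<^sub>R axis j (1::real)))"
      using nrm_sum[OF assms _ mem] by simp
    also have "\<dots> \<le> (\<Sum>j\<in>UNIV. c j * norm t)"
    proof (rule sum_mono)
      fix j
      show "nrm ((t $ j) *\<^sub>R axis j (1::real)) \<le> c j * norm t"
      proof (cases "blk j = i")
        case True
        then have ax: "axis j (1::real) \<in> block_space blk i" by (auto simp: block_space_def axis_def)
        then have "nrm ((t $ j) *\<^sub>R axis j (1::real)) = \<bar>t $ j\<bar> * c j"
          using assms True unfolding is_norm_on_def c_def by auto
        also have "\<dots> \<le> norm t * c j"
          using c0[of j] component_le_norm_cart[of t j] by (intro mult_right_mono) auto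
        finally show ?thesis by (simp add: mult.commute)
      next
        case False
        then have "t $ j = 0" using t by (auto simp: block_space_def)
        then show ?thesis using nrm_zero[OF assms] c0[of j] by simp
      qed
    qed
    also have "\<dots> = (\<Sum>j\<in>UNIV. c j) * norm t" by (simp add: sum_distrib_right)
    finally show ?thesis .
  qed
  moreover have "(\<Sum>j\<in>UNIV. c j) \<ge> 0" using c0 by (simp add: sum_nonneg)
  ultimately show ?thesis by blast
qed

lemma nrm_lip:
  assumes "is_norm_on (block_space blk i) nrm"
  shows "\<exists>C\<ge>0. \<forall>x\<in>block_space blk i. \<forall>y\<in>block_space blk i. \<bar>nrm x - nrm y\<bar> \<le> C * dist x y"
proof -
  obtain C where C: "C \<ge> 0" "\<forall>t\<in>block_space blk i. nrm t \<le> C * norm t"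
    using nrm_upper[OF assms] by blast
  have "\<bar>nrm x - nrm y\<bar> \<le> C * dist x y" if xy: "x \<in> block_space blk i" "y \<in> block_space blk i" for x y
  proof -
    have d1: "x - y \<in> block_space blk i" "y - x \<in> block_space blk i"
      using xy subspace_block by (auto intro: subspace_diff)
    have "nrm x = nrm (y + (x - y))" by simp
    also have "\<dots> \<le> nrm y + nrm (x - y)" using assms xy d1 unfolding is_norm_on_def by blast
    finally have a: "nrm x \<le> nrm y + C * dist x y" using C d1 by (force simp: dist_norm)
    have "nrm y = nrm (x + (y - x))" by simp
    also have "\<dots> \<le> nrm x + nrm (y - x)" using assms xy d1 unfolding is_norm_on_def by blast
    finally have b: "nrm y \<le> nrm x + C * dist x y" using C d1 by (force simp: dist_norm norm_minus_commute)
    show ?thesis using a b by linarith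
  qed
  then show ?thesis using C by blast
qed

lemma nrm_lower:
  assumes "is_norm_on (block_space blk i) nrm" "\<exists>j. blk j = i"
  shows "\<exists>m>0. \<forall>t\<in>block_space blk i. m * norm t \<le> nrm t"
proof -
  let ?B = "block_space blk i"
  let ?S = "?B \<inter> sphere 0 1"
  obtain C where C: "C \<ge> 0" "\<forall>x\<in>?B. \<forall>y\<in>?B. \<bar>nrm x - nrm y\<bar> \<le> C * dist x y"
    using nrm_lip[OF assms(1)] by blast
  have cpt: "compact ?S"
    by (intro closed_Int_compact closed_subspace subspace_block compact_sphere)
  obtain j where j: "blk j = i" using assms(2) by blast
  have "axis j (1::real) \<in> ?B" using j by (auto simp: block_space_def axis_def)
  moreover have "norm (axis j (1::real)) = 1" by (simp add: norm_axis_1)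
  ultimately have "axis j (1::real) \<in> ?S" by simp
  then have ne: "?S \<noteq> {}" by blast
  have cont: "continuous_on ?S nrm"
    unfolding continuous_on_iff
  proof (intro ballI allI impI)
    fix x e assume x: "x \<in> ?S" and e: "(0::real) < e"
    show "\<exists>d>0. \<forall>x'\<in>?S. dist x' x < d \<longrightarrow> dist (nrm x') (nrm x) < e"
    proof (intro exI[of _ "e / (C + 1)"] conjI ballI impI)
      show "0 < e / (C + 1)" using e C by simp
      fix x' assume x': "x' \<in> ?S" and d: "dist x' x < e / (C + 1)"
      have "dist (nrm x') (nrm x) \<le> C * dist x' x" using C x x' by (simp add: dist_real_def)
      also have "\<dots> \<le> C * (e / (C + 1))" using d C by (intro mult_left_mono) auto
      also have "\<dots> < e" using e C by (simp add: field_simps)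
      finally show "dist (nrm x') (nrm x) < e" .
    qed
  qed
  obtain t0 where t0: "t0 \<in> ?S" "\<forall>y\<in>?S. nrm t0 \<le> nrm y"
    using continuous_attains_inf[OF cpt ne cont] by blast
  have "t0 \<noteq> 0" using t0 by auto
  then have mpos: "nrm t0 > 0" using assms(1) t0 unfolding is_norm_on_def by force
  have "nrm t0 * norm t \<le> nrm t" if t: "t \<in> ?B" for t
  proof (cases "t = 0")
    case True then show ?thesis using nrm_zero[OF assms(1)] by simp
  next
    case False
    let ?u = "(1 / norm t) *\<^sub>R t"
    have "?u \<in> ?S" using t False subspace_block
      by (auto intro: subspace_scale)
    then have "nrm t0 \<le> nrm ?u" using t0 by blast
    also have "nrm ?u = (1 / norm t) * nrm t" using assms(1) t unfolding is_norm_on_def by simp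
    finally show ?thesis using False by (simp add: field_simps)
  qed
  then show ?thesis using mpos by blast
qed

lemma nrm_nonneg:
  assumes "is_norm_on B nrm" "t \<in> B"
  shows "0 \<le> nrm t"
  using assms unfolding is_norm_on_def by blast

lemma unit_exists:
  assumes "is_norm_on (block_space blk i) nrm" "\<exists>j. blk j = i"
  shows "\<exists>t\<in>block_space blk i. nrm t = 1"
proof -
  obtain j where j: "blk j = i" using assms(2) by blast
  let ?a = "axis j (1::real)"
  have a: "?a \<in> block_space blk i" using j by (auto simp: block_space_def axis_def)
  have "?a \<noteq> 0" by (simp add: axis_eq_0_iff)
  then have pos: "nrm ?a > 0" using assms(1) a unfolding is_norm_on_def by force
  have "(1 / nrm ?a) *\<^sub>R ?a \<in> block_space blk i" using a subspace_block by (auto intro: subspace_scale)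
  moreover have "nrm ((1 / nrm ?a) *\<^sub>R ?a) = 1" using assms(1) a pos unfolding is_norm_on_def by simp
  ultimately show ?thesis by blast
qed

lemma dual_bdd:
  assumes "is_norm_on (block_space blk i) nrm" "\<exists>j. blk j = i"
  shows "bdd_above {s \<bullet> t | t. t \<in> block_space blk i \<and> nrm t = 1}"
proof -
  obtain m where m: "m > 0" "\<forall>t\<in>block_space blk i. m * norm t \<le> nrm t"
    using nrm_lower[OF assms] by blast
  have "s \<bullet> t \<le> norm s / m" if "t \<in> block_space blk i" "nrm t = 1" for t
  proof -
    have "m * norm t \<le> 1" using m(2) that by force
    then have nt: "norm t \<le> 1 / m" using m by (simp add: field_simps)
    have "s \<bullet> t \<le> norm s * norm t" by (rule norm_cauchy_schwarz)
    also have "\<dots> \<le> norm s * (1 / m)" using nt by (intro mult_left_mono) auto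
    finally show ?thesis by simp
  qed
  then show ?thesis unfolding bdd_above_def by blast
qed

lemma dual_upper:
  assumes "is_norm_on (block_space blk i) nrm" "\<exists>j. blk j = i"
    "t \<in> block_space blk i" "nrm t = 1"
  shows "s \<bullet> t \<le> dual_norm (block_space blk i) nrm s"
  unfolding dual_norm_def using assms by (intro cSup_upper dual_bdd) auto

lemma dual_nonneg:
  assumes "is_norm_on (block_space blk i) nrm" "\<exists>j. blk j = i"
  shows "0 \<le> dual_norm (block_space blk i) nrm s"
proof -
  obtain t where t: "t \<in> block_space blk i" "nrm t = 1" using unit_exists[OF assms] by blast
  have mt: "- t \<in> block_space blk i" using t subspace_block by (auto intro: subspace_neg)
  have "nrm (- t) = 1" using assms(1) t unfolding is_norm_on_def
    by (metis abs_minus_cancel abs_one mult_1 scaleR_minus1_left)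
  then have "s \<bullet> (- t) \<le> dual_norm (block_space blk i) nrm s" using dual_upper[OF assms mt] by simp
  moreover have "s \<bullet> t \<le> dual_norm (block_space blk i) nrm s" using dual_upper[OF assms t] .
  ultimately show ?thesis by simp
qed

lemma dual_bound:
  assumes "is_norm_on (block_space blk i) nrm" "\<exists>j. blk j = i" "t \<in> block_space blk i"
  shows "s \<bullet> t \<le> dual_norm (block_space blk i) nrm s * nrm t"
proof (cases "t = 0")
  case True then show ?thesis using nrm_zero[OF assms(1)] by simp
next
  case False
  then have pos: "nrm t > 0" using assms(1,3) unfolding is_norm_on_def by force
  let ?u = "(1 / nrm t) *\<^sub>R t"
  have u: "?u \<in> block_space blk i" using assms(3) subspace_block by (auto intro: subspace_scale)
  have "nrm ?u = 1" using assms(1,3) pos False unfolding is_norm_on_def by simp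
  then have "s \<bullet> ?u \<le> dual_norm (block_space blk i) nrm s" using dual_upper[OF assms(1,2) u] by simp
  then show ?thesis using pos by (simp add: field_simps)
qed

lemma deriv_line:
  assumes grad: "\<forall>x. (f has_derivative (\<lambda>h. grad x \<bullet> h)) (at x)"
  shows "((\<lambda>\<tau>. f (x + \<tau> *\<^sub>R t)) has_real_derivative (grad (x + \<tau> *\<^sub>R t) \<bullet> t)) (at \<tau>)"
proof -
  have l: "((\<lambda>\<tau>. x + \<tau> *\<^sub>R t) has_derivative (\<lambda>h. h *\<^sub>R t)) (at \<tau>)"
    by (auto intro!: derivative_eq_intros)
  have "((\<lambda>\<tau>. f (x + \<tau> *\<^sub>R t)) has_derivative (\<lambda>h. grad (x + \<tau> *\<^sub>R t) \<bullet> (h *\<^sub>R t))) (at \<tau>)"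
    using has_derivative_compose[OF l grad[rule_format, of "x + \<tau> *\<^sub>R t"]] .
  then show ?thesis
    by (rule has_derivative_imp_has_field_derivative) simp
qed

lemma descent:
  assumes grad: "\<forall>x. (f has_derivative (\<lambda>h. grad x \<bullet> h)) (at x)"
    and nr: "is_norm_on (block_space blk i) nrm" and ne: "\<exists>j. blk j = i"
    and lip: "\<forall>x. \<forall>t\<in>block_space blk i.
        dual_norm (block_space blk i) nrm
          (block_proj blk i (grad (x + t)) - block_proj blk i (grad x)) \<le> Li * nrm t"
    and t: "t \<in> block_space blk i"
  shows "f (x + t) \<le> f x + grad x \<bullet> t + Li / 2 * (nrm t)\<^sup>2"
proof -
  define \<phi> where "\<phi> \<tau> = f (x + \<tau> *\<^sub>R t) - \<tau> * (grad x \<bullet> t) - Li / 2 * \<tau>\<^sup>2 * (nrm t)\<^sup>2" for \<tau>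
  have "\<phi> 1 \<le> \<phi> 0"
  proof (rule DERIV_nonpos_imp_nonincreasing[of 0 1 \<phi>])
    fix \<tau> :: real assume \<tau>: "0 \<le> \<tau>" "\<tau> \<le> 1"
    have D: "DERIV \<phi> \<tau> :> grad (x + \<tau> *\<^sub>R t) \<bullet> t - grad x \<bullet> t - Li * \<tau> * (nrm t)\<^sup>2"
      unfolding \<phi>_def
      by (rule derivative_eq_intros deriv_line[OF grad] | simp)+
    have tt: "\<tau> *\<^sub>R t \<in> block_space blk i" using t subspace_block by (auto intro: subspace_scale)
    have "grad (x + \<tau> *\<^sub>R t) \<bullet> t - grad x \<bullet> t
        = (block_proj blk i (grad (x + \<tau> *\<^sub>R t)) - block_proj blk i (grad x)) \<bullet> t"
      using inner_proj[OF t] by (simp add: inner_diff_left)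
    also have "\<dots> \<le> dual_norm (block_space blk i) nrm
          (block_proj blk i (grad (x + \<tau> *\<^sub>R t)) - block_proj blk i (grad x)) * nrm t"
      by (rule dual_bound[OF nr ne t])
    also have "\<dots> \<le> (Li * nrm (\<tau> *\<^sub>R t)) * nrm t"
      using lip tt nrm_nonneg[OF nr t] by (intro mult_right_mono) auto
    also have "\<dots> = Li * \<tau> * (nrm t)\<^sup>2"
      using nr t \<tau> unfolding is_norm_on_def by (simp add: power2_eq_square)
    finally show "\<exists>y. DERIV \<phi> \<tau> :> y \<and> y \<le> 0" using D by (intro exI[of _ _]) auto
  qed simp
  then show ?thesis unfolding \<phi>_def by simp
qed

lemma sharp_bound:
  assumes nr: "is_norm_on (block_space blk i) nrm" and ne: "\<exists>j. blk j = i"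
    and uin: "u \<in> block_space blk i"
    and opt: "\<forall>t\<in>block_space blk i. - (s \<bullet> u) + (nrm u)\<^sup>2 / 2 \<le> - (s \<bullet> t) + (nrm t)\<^sup>2 / 2"
  shows "- (s \<bullet> u) + (nrm u)\<^sup>2 / 2 \<le> - (dual_norm (block_space blk i) nrm s)\<^sup>2 / 2"
proof -
  let ?\<phi> = "- (s \<bullet> u) + (nrm u)\<^sup>2 / 2"
  let ?d = "dual_norm (block_space blk i) nrm s"
  have unit: "(s \<bullet> t)\<^sup>2 \<le> - 2 * ?\<phi>" if t: "t \<in> block_space blk i" "nrm t = 1" for t
  proof -
    have lt: "(s \<bullet> t) *\<^sub>R t \<in> block_space blk i" using t subspace_block by (auto intro: subspace_scale)
    have "?\<phi> \<le> - (s \<bullet> ((s \<bullet> t) *\<^sub>R t)) + (nrm ((s \<bullet> t) *\<^sub>R t))\<^sup>2 / 2"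
      using opt lt by blast
    also have "\<dots> = - (s \<bullet> t)\<^sup>2 / 2"
      using nr t unfolding is_norm_on_def by (simp add: power2_eq_square)
    finally show ?thesis by simp
  qed
  have "?d \<le> sqrt (- 2 * ?\<phi>)"
    unfolding dual_norm_def
  proof (rule cSup_least)
    show "{s \<bullet> t |t. t \<in> block_space blk i \<and> nrm t = 1} \<noteq> {}"
      using unit_exists[OF nr ne] by blast
  next
    fix y assume "y \<in> {s \<bullet> t |t. t \<in> block_space blk i \<and> nrm t = 1}"
    then obtain t where "t \<in> block_space blk i" "nrm t = 1" "y = s \<bullet> t" by blast
    then show "y \<le> sqrt (- 2 * ?\<phi>)" using unit by (intro real_le_rsqrt) auto
  qed
  moreover have "0 \<le> ?d" by (rule dual_nonneg[OF nr ne])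
  moreover have "?\<phi> \<le> 0"
    using opt zero_in_block[of blk i] nrm_zero[OF nr] by force
  ultimately have "?d\<^sup>2 \<le> (sqrt (- 2 * ?\<phi>))\<^sup>2" by (intro power_mono) auto
  also have "(sqrt (- 2 * ?\<phi>))\<^sup>2 = - 2 * ?\<phi>" using \<open>?\<phi> \<le> 0\<close> by (intro real_sqrt_pow2) simp
  finally show ?thesis by simp
qed

lemma grad_ineq:
  assumes convex: "convex_on UNIV f"
    and grad: "\<forall>x. (f has_derivative (\<lambda>h. grad x \<bullet> h)) (at x)"
  shows "f y \<ge> f x + grad x \<bullet> (y - x)"
proof -
  let ?h = "y - x"
  define g where "g \<tau> = f (x + \<tau> *\<^sub>R ?h)" for \<tau> :: real
  have cg: "convex_on UNIV g"
  proof (rule convex_onI)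
    fix t a b :: real assume t: "0 < t" "t < 1"
    have eq: "(1 - t) *\<^sub>R (x + a *\<^sub>R ?h) + t *\<^sub>R (x + b *\<^sub>R ?h) = x + ((1 - t) *\<^sub>R a + t *\<^sub>R b) *\<^sub>R ?h"
      by (simp add: algebra_simps)
    show "g ((1 - t) *\<^sub>R a + t *\<^sub>R b) \<le> (1 - t) * g a + t * g b"
      unfolding g_def using convex_onD[OF convex, of t "x + a *\<^sub>R ?h" "x + b *\<^sub>R ?h"] t eq by simp
  qed simp
  have d: "(g has_real_derivative (grad x \<bullet> ?h)) (at 0 within UNIV)"
    unfolding g_def using deriv_line[OF grad, of x ?h 0] by simp
  have "g 1 - g 0 \<ge> (grad x \<bullet> ?h) * (1 - 0)"
    by (rule convex_on_imp_above_tangent[OF cg]) (use d in auto)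
  then show ?thesis unfolding g_def by simp
qed

locale rsetting =
  fixes n :: nat
    and blk :: "'N::finite \<Rightarrow> nat"
    and nrm :: "nat \<Rightarrow> real^'N \<Rightarrow> real"
    and f :: "real^'N \<Rightarrow> real"
    and grad :: "real^'N \<Rightarrow> real^'N"
    and L :: "nat \<Rightarrow> real"
    and I :: "nat pmf"
    and sharp :: "nat \<Rightarrow> real^'N \<Rightarrow> real^'N"
    and x0 :: "real^'N"
    and fstar :: real
  assumes blk_range: "\<forall>j. blk j < n"
    and blk_nonempty: "\<forall>i<n. \<exists>j. blk j = i"
    and norms: "\<forall>i<n. is_norm_on (block_space blk i) (nrm i)"
    and convex: "convex_on UNIV f"
    and grad: "\<forall>x. (f has_derivative (\<lambda>h. grad x \<bullet> h)) (at x)"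
    and L_pos: "\<forall>i<n. L i > 0"
    and lipschitz: "\<forall>i<n. \<forall>x. \<forall>t\<in>block_space blk i.
        dual_norm (block_space blk i) (nrm i)
          (block_proj blk i (grad (x + t)) - block_proj blk i (grad x))
        \<le> L i * nrm i t"
    and attains: "\<exists>xs. \<forall>y. f xs \<le> f y"
    and fstar: "fstar = (INF y. f y)"
    and support: "set_pmf I = {0..<n}"
    and sharp: "\<forall>i<n. \<forall>s\<in>block_space blk i.
        sharp i s \<in> block_space blk i \<and>
        (\<forall>t\<in>block_space blk i.
           - (s \<bullet> sharp i s) + (nrm i (sharp i s))\<^sup>2 / 2 \<le> - (s \<bullet> t) + (nrm i t)\<^sup>2 / 2)"
    and R_finite: "bdd_above {wnorm n blk nrm (\<lambda>i. L i / pmf I i) (y - xs) | y xs.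
                      f y \<le> f x0 \<and> (\<forall>z. f xs \<le> f z)}"
begin

abbreviation "R \<equiv> level_radius n blk nrm (\<lambda>i. L i / pmf I i) f x0"
abbreviation "dd i x \<equiv> dual_norm (block_space blk i) (nrm i) (block_proj blk i (grad x))"
abbreviation "step i x \<equiv> rcds_step blk L sharp grad i x"

lemma p_pos: "i < n \<Longrightarrow> pmf I i > 0"
  using support by (simp add: pmf_positive)

lemma p_sum: "(\<Sum>i<n. pmf I i) = 1"
  using support sum_pmf_eq_1[of "{..<n}" I] by (simp add: atLeast0LessThan)

lemma obtain_xs: obtains xs where "\<forall>y. f xs \<le> f y" "fstar = f xs"
proof -
  obtain xs where xs: "\<forall>y. f xs \<le> f y" using attains by blast
  have "fstar = f xs" unfolding fstar using xs
    by (intro antisym cINF_lower cINF_greatest) (auto intro: bdd_belowI)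
  then show ?thesis using that xs by blast
qed

lemma fstar_le: "fstar \<le> f y"
  using obtain_xs by metis

lemma step_bound:
  assumes i: "i < n"
  shows "f (step i x) \<le> f x - (dd i x)\<^sup>2 / (2 * L i)"
proof -
  let ?B = "block_space blk i"
  let ?s = "block_proj blk i (grad x)"
  let ?u = "sharp i ?s"
  have nr: "is_norm_on ?B (nrm i)" and ne: "\<exists>j. blk j = i" using norms blk_nonempty i by auto
  have sB: "?s \<in> ?B" by (rule block_proj_in)
  have uB: "?u \<in> ?B" and opt: "\<forall>t\<in>?B. - (?s \<bullet> ?u) + (nrm i ?u)\<^sup>2 / 2 \<le> - (?s \<bullet> t) + (nrm i t)\<^sup>2 / 2"
    using sharp i sB by auto
  have Lp: "L i > 0" using L_pos i by auto
  let ?t = "(- (1 / L i)) *\<^sub>R ?u"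
  have tB: "?t \<in> ?B" by (rule subspace_scale[OF subspace_block uB])
  have "step i x = x + ?t" by (simp add: rcds_step_def)
  then have "f (step i x) \<le> f x + grad x \<bullet> ?t + L i / 2 * (nrm i ?t)\<^sup>2"
    using descent[OF grad nr ne _ tB, of "L i"] lipschitz i by auto
  also have "grad x \<bullet> ?t = - (1 / L i) * (?s \<bullet> ?u)"
    using inner_proj[OF uB, of "grad x"] by simp
  also have "nrm i ?t = (1 / L i) * nrm i ?u"
  proof -
    have "nrm i ?t = \<bar>- (1 / L i)\<bar> * nrm i ?u"
      using nr uB unfolding is_norm_on_def by blast
    then show ?thesis using Lp by simp
  qed
  also have "f x + - (1 / L i) * (?s \<bullet> ?u) + L i / 2 * ((1 / L i) * nrm i ?u)\<^sup>2
      = f x + (1 / L i) * (- (?s \<bullet> ?u) + (nrm i ?u)\<^sup>2 / 2)"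
    using Lp by (simp add: field_simps power2_eq_square)
  also have "\<dots> \<le> f x + (1 / L i) * (- (dd i x)\<^sup>2 / 2)"
    using sharp_bound[OF nr ne uB opt] Lp by (intro add_left_mono mult_left_mono) auto
  also have "\<dots> = f x - (dd i x)\<^sup>2 / (2 * L i)" by simp
  finally show ?thesis .
qed

lemma step_le: "i < n \<Longrightarrow> f (step i x) \<le> f x"
  using step_bound[of i x] L_pos
  by (smt (verit, ccfv_SIG) divide_nonneg_pos zero_le_power2)

end

context rsetting
begin

lemma n_pos: "n > 0"
  using blk_range by (metis gr0I not_less0)

lemma wnorm_le_R:
  assumes "f y \<le> f x0" "\<forall>z. f xs \<le> f z"
  shows "wnorm n blk nrm (\<lambda>i. L i / pmf I i) (y - xs) \<le> R"
  unfolding level_radius_def using assms by (intro cSup_upper R_finite) auto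

lemma wsum_nonneg:
  "0 \<le> (\<Sum>i<n. L i / pmf I i * (nrm i (block_proj blk i h))\<^sup>2)"
  proof (rule sum_nonneg)
    fix i assume "i \<in> {..<n}"
    then show "0 \<le> L i / pmf I i * (nrm i (block_proj blk i h))\<^sup>2"
      using L_pos by (intro mult_nonneg_nonneg divide_nonneg_nonneg) (auto simp: less_imp_le)
qed

lemma wnorm_sq:
  "(wnorm n blk nrm (\<lambda>i. L i / pmf I i) h)\<^sup>2 = (\<Sum>i<n. L i / pmf I i * (nrm i (block_proj blk i h))\<^sup>2)"
  unfolding wnorm_def by (rule real_sqrt_pow2[OF wsum_nonneg])

lemma wnorm_nonneg: "0 \<le> wnorm n blk nrm (\<lambda>i. L i / pmf I i) h"
  unfolding wnorm_def by (rule real_sqrt_ge_zero[OF wsum_nonneg])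

lemma S_nonneg: "0 \<le> (\<Sum>i<n. pmf I i / L i * (dd i x)\<^sup>2)"
proof (rule sum_nonneg)
  fix i assume "i \<in> {..<n}"
  then show "0 \<le> pmf I i / L i * (dd i x)\<^sup>2"
    using L_pos by (intro mult_nonneg_nonneg divide_nonneg_nonneg) (auto simp: less_imp_le)
qed

lemma gap_bound:
  assumes fx: "f x \<le> f x0"
  shows "f x - fstar \<le> R * sqrt (\<Sum>i<n. pmf I i / L i * (dd i x)\<^sup>2)"
proof -
  obtain xs where xs: "\<forall>y. f xs \<le> f y" "fstar = f xs" using obtain_xs by blast
  let ?h = "x - xs"
  define a where "a i = sqrt (pmf I i / L i) * dd i x" for i
  define b where "b i = sqrt (L i / pmf I i) * nrm i (block_proj blk i ?h)" for i
  have "f x - fstar \<le> grad x \<bullet> ?h"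
    using grad_ineq[OF convex grad, of x xs] xs by (simp add: inner_diff_right)
  also have "\<dots> = (\<Sum>i<n. block_proj blk i (grad x) \<bullet> block_proj blk i ?h)"
    by (rule inner_split[OF blk_range])
  also have "\<dots> \<le> (\<Sum>i<n. dd i x * nrm i (block_proj blk i ?h))"
    using norms blk_nonempty by (intro sum_mono dual_bound block_proj_in) auto
  also have "\<dots> = (\<Sum>i<n. \<bar>a i\<bar> * \<bar>b i\<bar>)"
  proof (rule sum.cong[OF refl])
    fix i assume "i \<in> {..<n}"
    then have i: "i < n" by simp
    have d0: "0 \<le> dd i x" using norms blk_nonempty i by (intro dual_nonneg) auto
    have n0: "0 \<le> nrm i (block_proj blk i ?h)"
      using norms i by (intro nrm_nonneg[OF _ block_proj_in]) auto
    have pl: "pmf I i > 0" "L i > 0" using p_pos L_pos i by auto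
    have "sqrt (pmf I i / L i) * sqrt (L i / pmf I i) = 1"
      using pl by (simp add: real_sqrt_mult[symmetric])
    then show "dd i x * nrm i (block_proj blk i ?h) = \<bar>a i\<bar> * \<bar>b i\<bar>"
    proof -
      have "\<bar>a i\<bar> * \<bar>b i\<bar> = (sqrt (pmf I i / L i) * sqrt (L i / pmf I i)) * (dd i x * nrm i (block_proj blk i ?h))"
      proof -
        have "0 \<le> sqrt (pmf I i / L i)" "0 \<le> sqrt (L i / pmf I i)" using pl by auto
        then show ?thesis unfolding a_def b_def using d0 n0 by (simp add: abs_mult mult_ac)
      qed
      then show ?thesis using \<open>sqrt (pmf I i / L i) * sqrt (L i / pmf I i) = 1\<close> by simp
    qed
  qed
  also have "\<dots> \<le> L2_set a {..<n} * L2_set b {..<n}" by (rule L2_set_mult_ineq)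
  also have "L2_set a {..<n} = sqrt (\<Sum>i<n. pmf I i / L i * (dd i x)\<^sup>2)"
    unfolding L2_set_def a_def using p_pos L_pos
    by (intro arg_cong[where f = sqrt] sum.cong refl) (simp add: power_mult_distrib less_imp_le)
  also have "L2_set b {..<n} = wnorm n blk nrm (\<lambda>i. L i / pmf I i) ?h"
    unfolding L2_set_def b_def wnorm_def using p_pos L_pos
    by (intro arg_cong[where f = sqrt] sum.cong refl) (simp add: power_mult_distrib less_imp_le)
  also have "sqrt (\<Sum>i<n. pmf I i / L i * (dd i x)\<^sup>2) * wnorm n blk nrm (\<lambda>i. L i / pmf I i) ?h
      \<le> sqrt (\<Sum>i<n. pmf I i / L i * (dd i x)\<^sup>2) * R"
    using wnorm_le_R[OF fx xs(1)] S_nonneg by (intro mult_left_mono) auto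
  finally show ?thesis by (simp add: mult.commute)
qed

lemma exp_dec:
  assumes fx: "f x \<le> f x0" and Rp: "R > 0"
  shows "(\<Sum>i<n. pmf I i * f (step i x)) \<le> f x - (f x - fstar)\<^sup>2 / (2 * R\<^sup>2)"
proof -
  let ?S = "\<Sum>i<n. pmf I i / L i * (dd i x)\<^sup>2"
  have S0: "0 \<le> ?S" by (rule S_nonneg)
  have "(\<Sum>i<n. pmf I i * f (step i x)) \<le> (\<Sum>i<n. pmf I i * (f x - (dd i x)\<^sup>2 / (2 * L i)))"
    using step_bound p_pos by (intro sum_mono mult_left_mono) (auto simp: less_imp_le)
  also have "\<dots> = (\<Sum>i<n. pmf I i * f x - pmf I i / L i * (dd i x)\<^sup>2 / 2)"
    by (intro sum.cong refl) (simp add: right_diff_distrib)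
  also have "\<dots> = (\<Sum>i<n. pmf I i) * f x - ?S / 2"
    by (simp add: sum_subtractf sum_distrib_right sum_divide_distrib)
  also have "\<dots> = f x - ?S / 2" using p_sum by simp
  finally have A: "(\<Sum>i<n. pmf I i * f (step i x)) \<le> f x - ?S / 2" .
  have g0: "0 \<le> f x - fstar" using fstar_le by simp
  have "(f x - fstar)\<^sup>2 \<le> (R * sqrt ?S)\<^sup>2" using gap_bound[OF fx] g0 by (intro power_mono) auto
  also have "\<dots> = R\<^sup>2 * ?S" using S0 by (simp add: power_mult_distrib)
  finally have "(f x - fstar)\<^sup>2 / (2 * R\<^sup>2) \<le> ?S / 2" using Rp by (simp add: field_simps)
  then show ?thesis using A by linarith
qed

lemma xi0_bound: "f x0 - fstar \<le> R\<^sup>2 / 2"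
proof -
  obtain xs where xs: "\<forall>y. f xs \<le> f y" "fstar = f xs" using obtain_xs by blast
  let ?h = "x0 - xs"
  let ?y = "\<lambda>i. xs + (1 / pmf I i) *\<^sub>R block_proj blk i ?h"
  have "(\<lambda>v. grad xs \<bullet> v) = (\<lambda>v. 0)"
    using differential_zero_maxmin[of xs UNIV f] grad xs by auto
  then have g0: "grad xs = 0" by (metis inner_eq_zero_iff)
  have "(\<Sum>i<n. pmf I i *\<^sub>R ?y i) = (\<Sum>i<n. pmf I i *\<^sub>R xs + block_proj blk i ?h)"
  proof (intro sum.cong refl)
    fix i assume "i \<in> {..<n}"
    then have "pmf I i \<noteq> 0" using p_pos by (metis lessThan_iff less_irrefl)
    then show "pmf I i *\<^sub>R ?y i = pmf I i *\<^sub>R xs + block_proj blk i ?h"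
      by (simp add: scaleR_add_right)
  qed
  also have "\<dots> = (\<Sum>i<n. pmf I i) *\<^sub>R xs + (\<Sum>i<n. block_proj blk i ?h)"
    by (simp add: sum.distrib scaleR_sum_left)
  also have "\<dots> = x0" using p_sum sum_proj[OF blk_range] by simp
  finally have x0eq: "x0 = (\<Sum>i<n. pmf I i *\<^sub>R ?y i)" by simp
  have "f (\<Sum>i<n. pmf I i *\<^sub>R ?y i) \<le> (\<Sum>i<n. pmf I i * f (?y i))"
    by (rule convex_on_sum[OF _ _ convex]) (use n_pos p_sum in auto)
  then have "f x0 \<le> (\<Sum>i<n. pmf I i * f (?y i))"
    by (simp only: x0eq[symmetric])
  also have "\<dots> \<le> (\<Sum>i<n. pmf I i * (f xs + L i / 2 * (1 / pmf I i)\<^sup>2 * (nrm i (block_proj blk i ?h))\<^sup>2))"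
  proof (intro sum_mono mult_left_mono)
    fix i assume "i \<in> {..<n}"
    then have i: "i < n" by simp
    have nr: "is_norm_on (block_space blk i) (nrm i)" and ne: "\<exists>j. blk j = i"
      using norms blk_nonempty i by auto
    have tB: "(1 / pmf I i) *\<^sub>R block_proj blk i ?h \<in> block_space blk i"
      by (rule subspace_scale[OF subspace_block block_proj_in])
    have "f (?y i) \<le> f xs + grad xs \<bullet> ((1 / pmf I i) *\<^sub>R block_proj blk i ?h)
        + L i / 2 * (nrm i ((1 / pmf I i) *\<^sub>R block_proj blk i ?h))\<^sup>2"
      using descent[OF grad nr ne _ tB, of "L i"] lipschitz i by auto
    also have "nrm i ((1 / pmf I i) *\<^sub>R block_proj blk i ?h) = (1 / pmf I i) * nrm i (block_proj blk i ?h)"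
    proof -
      have "nrm i ((1 / pmf I i) *\<^sub>R block_proj blk i ?h) = \<bar>1 / pmf I i\<bar> * nrm i (block_proj blk i ?h)"
        using nr block_proj_in unfolding is_norm_on_def by blast
      then show ?thesis using p_pos[OF i] by simp
    qed
    finally show "f (?y i) \<le> f xs + L i / 2 * (1 / pmf I i)\<^sup>2 * (nrm i (block_proj blk i ?h))\<^sup>2"
      using g0 by (simp add: power_divide)
    show "0 \<le> pmf I i" by simp
  qed
  also have "\<dots> = (\<Sum>i<n. pmf I i) * f xs + (\<Sum>i<n. L i / pmf I i * (nrm i (block_proj blk i ?h))\<^sup>2) / 2"
  proof -
    have "(\<Sum>i<n. pmf I i * (f xs + L i / 2 * (1 / pmf I i)\<^sup>2 * (nrm i (block_proj blk i ?h))\<^sup>2))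
       = (\<Sum>i<n. pmf I i * f xs + L i / pmf I i * (nrm i (block_proj blk i ?h))\<^sup>2 / 2)"
    proof (intro sum.cong refl)
      fix i assume "i \<in> {..<n}"
      then have "pmf I i \<noteq> 0" using p_pos by (metis lessThan_iff less_irrefl)
      then show "pmf I i * (f xs + L i / 2 * (1 / pmf I i)\<^sup>2 * (nrm i (block_proj blk i ?h))\<^sup>2)
         = pmf I i * f xs + L i / pmf I i * (nrm i (block_proj blk i ?h))\<^sup>2 / 2"
        by (simp add: distrib_left power2_eq_square)
    qed
    then show ?thesis by (simp add: sum.distrib sum_distrib_right sum_divide_distrib)
  qed
  also have "\<dots> = f xs + (wnorm n blk nrm (\<lambda>i. L i / pmf I i) ?h)\<^sup>2 / 2"
    using p_sum wnorm_sq by simp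
  also have "(wnorm n blk nrm (\<lambda>i. L i / pmf I i) ?h)\<^sup>2 \<le> R\<^sup>2"
    using wnorm_le_R[OF order.refl xs(1)] wnorm_nonneg by (intro power_mono) auto
  finally show ?thesis using xs by simp
qed

end

lemma seq_bound:
  fixes \<theta> :: "nat \<Rightarrow> real" and c \<epsilon> \<xi>0 \<rho> :: real and K :: nat
  assumes c: "c > 0" and e: "0 < \<epsilon>" "\<epsilon> < \<xi>0" "\<epsilon> < c"
    and nn: "\<forall>k. 0 \<le> \<theta> k" and t0: "\<theta> 0 \<le> \<xi>0"
    and r1: "\<forall>k. \<theta> (Suc k) \<le> \<theta> k - (\<theta> k)\<^sup>2 / c"
    and r2: "\<forall>k. \<theta> (Suc k) \<le> (1 - \<epsilon> / c) * \<theta> k"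
    and rho: "0 < \<rho>" "\<rho> < 1"
    and K: "real K \<ge> c / \<epsilon> * (1 + ln (1 / \<rho>)) + 2 - c / \<xi>0"
  shows "\<theta> K \<le> \<epsilon> * \<rho>"
proof -
  have x0p: "\<xi>0 > 0" using e by simp
  have A: "\<theta> k > 0 \<Longrightarrow> real k / c + 1 / \<xi>0 \<le> 1 / \<theta> k" for k
  proof (induction k)
    case 0
    then show ?case using t0 x0p by (simp add: frac_le)
  next
    case (Suc k)
    let ?u = "\<theta> k"
    have up: "?u > 0"
    proof (rule ccontr)
      assume "\<not> ?u > 0"
      then have "?u = 0" using nn[rule_format, of k] by linarith
      then show False using r1 Suc.prems by (metis diff_zero div_0 not_less power_zero_numeral)
    qed
    let ?w = "?u - ?u\<^sup>2 / c"
    have wp: "?w > 0" using r1 Suc.prems by (meson less_le_trans)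
    have "(1 / ?u + 1 / c) * ?w = 1 - ?u\<^sup>2 / c\<^sup>2"
      using up c by (simp add: field_simps power2_eq_square)
    also have "\<dots> \<le> 1" by simp
    finally have "1 / ?u + 1 / c \<le> 1 / ?w" using wp by (simp add: pos_le_divide_eq)
    also have "1 / ?w \<le> 1 / \<theta> (Suc k)" using r1 Suc.prems wp by (intro divide_left_mono) auto
    finally have B: "1 / ?u + 1 / c \<le> 1 / \<theta> (Suc k)" .
    have "real k / c + 1 / \<xi>0 \<le> 1 / ?u" using Suc.IH up by blast
    then show ?case using B by (simp add: add_divide_distrib)
  qed
  define a where "a = c / \<epsilon> - c / \<xi>0"
  have ap: "a > 0" unfolding a_def using c e by (simp add: frac_less2)
  define k1 where "k1 = nat \<lceil>a\<rceil>"
  have k1a: "real k1 \<ge> a" "real k1 < a + 1" unfolding k1_def using ap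
    by (auto simp: of_nat_nat) (linarith)
  have tk1: "\<theta> k1 \<le> \<epsilon>"
  proof (cases "\<theta> k1 > 0")
    case True
    have "1 / \<epsilon> = a / c + 1 / \<xi>0" unfolding a_def using c e x0p by (simp add: field_simps)
    also have "\<dots> \<le> real k1 / c + 1 / \<xi>0" using k1a c by (simp add: divide_right_mono)
    also have "\<dots> \<le> 1 / \<theta> k1" using A True by blast
    finally show ?thesis using True e by (simp add: field_simps)
  next
    case False then show ?thesis using e by simp
  qed
  let ?q = "\<epsilon> / c"
  have q: "0 < ?q" "?q < 1" using c e by auto
  have G: "\<theta> (k1 + m) \<le> (1 - ?q) ^ m * \<theta> k1" for m
  proof (induction m)
    case 0 then show ?case by simp
  next
    case (Suc m)
    have "\<theta> (k1 + Suc m) \<le> (1 - ?q) * \<theta> (k1 + m)" using r2 by simp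
    also have "\<dots> \<le> (1 - ?q) * ((1 - ?q) ^ m * \<theta> k1)" using Suc.IH q by (intro mult_left_mono) auto
    finally show ?case by simp
  qed
  define l where "l = ln (1 / \<rho>)"
  have lp: "l > 0" unfolding l_def using rho by simp
  have cel: "c / \<epsilon> * l \<ge> 0" using lp c e by simp
  have Kge: "real K \<ge> a + 2 + c / \<epsilon> * l" using K unfolding a_def l_def by (simp add: algebra_simps)
  have kk: "k1 \<le> K" using Kge k1a cel by linarith
  define m where "m = K - k1"
  have Km: "K = k1 + m" unfolding m_def using kk by simp
  have mge: "real m \<ge> c / \<epsilon> * l" unfolding m_def using kk Kge k1a by (simp add: of_nat_diff)
  have "(1 - ?q) ^ m \<le> exp (- ?q) ^ m"
    using q by (intro power_mono) (auto simp: exp_ge_add_one_self[of "- ?q", simplified])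
  also have "\<dots> = exp (real m * (- ?q))" by (rule exp_of_nat_mult[symmetric])
  also have "\<dots> \<le> exp (- l)"
  proof -
    have "?q * (c / \<epsilon> * l) \<le> ?q * real m" using mge q by (intro mult_left_mono) auto
    moreover have "?q * (c / \<epsilon> * l) = l" using c e by (simp add: field_simps)
    ultimately have "l \<le> real m * ?q" by (simp add: mult.commute)
    then show ?thesis by simp
  qed
  also have "exp (- l) = \<rho>" unfolding l_def using rho by (simp add: ln_div)
  finally have qm: "(1 - ?q) ^ m \<le> \<rho>" .
  have "\<theta> K \<le> (1 - ?q) ^ m * \<theta> k1" using G Km by simp
  also have "\<dots> \<le> \<rho> * \<epsilon>" using qm tk1 nn q rho by (intro mult_mono) auto
  finally show ?thesis by (simp add: mult.commute)
qed

context rsetting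
begin

definition "gg \<epsilon> x = (if f x \<le> f x0 \<and> \<epsilon> \<le> f x - fstar then f x - fstar else 0)"
abbreviation "DD k \<equiv> rcds blk L sharp grad I x0 k"

lemma supp_level: "x \<in> set_pmf (DD k) \<Longrightarrow> f x \<le> f x0"
proof (induction k arbitrary: x)
  case 0 then show ?case by simp
next
  case (Suc k)
  then obtain y i where y: "y \<in> set_pmf (DD k)" and i: "i \<in> set_pmf I" and x: "x = step i y"
    by auto
  have "i < n" using i support by auto
  then have "f x \<le> f y" using x step_le by simp
  then show ?case using Suc.IH[OF y] by simp
qed

lemma finite_supp: "finite (set_pmf (DD k))"
proof (induction k)
  case 0 then show ?case by simp
next
  case (Suc k)
  have fI: "finite (set_pmf I)" using support by simp
  show ?case using Suc fI by simp
qed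

lemma gg_nonneg: "0 \<le> gg \<epsilon> x"
  unfolding gg_def using fstar_le[of x] by auto

lemma gg_le: "gg \<epsilon> x \<le> f x0 - fstar"
  unfolding gg_def using fstar_le[of x0] by auto

lemma inner_int:
  "(\<integral>i. gg \<epsilon> (step i x) \<partial>measure_pmf I) = (\<Sum>i<n. pmf I i * gg \<epsilon> (step i x))"
  using support by (subst integral_measure_pmf[of "{..<n}"]) auto

lemma inner_bound:
  assumes fx: "f x \<le> f x0" and Rp: "R > 0" and e: "0 < \<epsilon>"
  shows "(\<Sum>i<n. pmf I i * gg \<epsilon> (step i x)) \<le> gg \<epsilon> x - (gg \<epsilon> x)\<^sup>2 / (2 * R\<^sup>2)"
    and "(\<Sum>i<n. pmf I i * gg \<epsilon> (step i x)) \<le> (1 - \<epsilon> / (2 * R\<^sup>2)) * gg \<epsilon> x"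
proof -
  have c: "2 * R\<^sup>2 > 0" using Rp by simp
  have "(\<Sum>i<n. pmf I i * gg \<epsilon> (step i x)) \<le> gg \<epsilon> x - (gg \<epsilon> x)\<^sup>2 / (2 * R\<^sup>2)
     \<and> gg \<epsilon> x - (gg \<epsilon> x)\<^sup>2 / (2 * R\<^sup>2) \<le> (1 - \<epsilon> / (2 * R\<^sup>2)) * gg \<epsilon> x"
  proof (cases "\<epsilon> \<le> f x - fstar")
    case True
    then have gx: "gg \<epsilon> x = f x - fstar" using fx by (simp add: gg_def)
    have "(\<Sum>i<n. pmf I i * gg \<epsilon> (step i x)) \<le> (\<Sum>i<n. pmf I i * (f (step i x) - fstar))"
    proof (intro sum_mono mult_left_mono)
      fix i assume "i \<in> {..<n}"
      then have "f (step i x) \<le> f x" using step_le by simp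
      then show "gg \<epsilon> (step i x) \<le> f (step i x) - fstar"
        unfolding gg_def using fstar_le[of "step i x"] by auto
    qed simp
    also have "\<dots> = (\<Sum>i<n. pmf I i * f (step i x)) - (\<Sum>i<n. pmf I i) * fstar"
      by (simp add: right_diff_distrib sum_subtractf sum_distrib_right)
    also have "\<dots> \<le> f x - (f x - fstar)\<^sup>2 / (2 * R\<^sup>2) - fstar"
      using exp_dec[OF fx Rp] p_sum by simp
    finally have A: "(\<Sum>i<n. pmf I i * gg \<epsilon> (step i x)) \<le> gg \<epsilon> x - (gg \<epsilon> x)\<^sup>2 / (2 * R\<^sup>2)"
      using gx by simp
    have "\<epsilon> * gg \<epsilon> x \<le> gg \<epsilon> x * gg \<epsilon> x" using True gx fstar_le[of x] by (intro mult_right_mono) auto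
    then have "\<epsilon> * gg \<epsilon> x / (2 * R\<^sup>2) \<le> (gg \<epsilon> x)\<^sup>2 / (2 * R\<^sup>2)"
      using c by (simp add: power2_eq_square divide_right_mono)
    then have "gg \<epsilon> x - (gg \<epsilon> x)\<^sup>2 / (2 * R\<^sup>2) \<le> (1 - \<epsilon> / (2 * R\<^sup>2)) * gg \<epsilon> x"
      by (simp add: left_diff_distrib)
    then show ?thesis using A by simp
  next
    case False
    then have gx: "gg \<epsilon> x = 0" by (simp add: gg_def)
    have "gg \<epsilon> (step i x) = 0" if "i \<in> {..<n}" for i
    proof -
      have "f (step i x) \<le> f x" using step_le that by simp
      then show ?thesis using False by (simp add: gg_def)
    qed
    then show ?thesis using gx by simp
  qed
  then show "(\<Sum>i<n. pmf I i * gg \<epsilon> (step i x)) \<le> gg \<epsilon> x - (gg \<epsilon> x)\<^sup>2 / (2 * R\<^sup>2)"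
    and "(\<Sum>i<n. pmf I i * gg \<epsilon> (step i x)) \<le> (1 - \<epsilon> / (2 * R\<^sup>2)) * gg \<epsilon> x" by linarith+
qed

lemma gg_int_nonneg: "0 \<le> (\<integral>x. gg \<epsilon> (h x) \<partial>measure_pmf M)"
  by (rule integral_nonneg_AE) (simp add: gg_nonneg)

lemma rec_eq:
  "(\<integral>y. gg \<epsilon> y \<partial>measure_pmf (DD (Suc k)))
   = (\<integral>x. (\<integral>i. gg \<epsilon> (step i x) \<partial>measure_pmf I) \<partial>measure_pmf (DD k))"
proof -
  have fI: "finite (set_pmf I)" using support by simp
  have "ennreal (\<integral>y. gg \<epsilon> y \<partial>measure_pmf (DD (Suc k))) = (\<integral>\<^sup>+y. gg \<epsilon> y \<partial>measure_pmf (DD (Suc k)))"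
    by (rule nn_integral_eq_integral[symmetric, OF integrable_measure_pmf_finite[OF finite_supp]])
       (auto intro: gg_nonneg)
  also have "\<dots> = (\<integral>\<^sup>+x. (\<integral>\<^sup>+i. gg \<epsilon> (step i x) \<partial>measure_pmf I) \<partial>measure_pmf (DD k))"
    by simp
  also have "\<dots> = (\<integral>\<^sup>+x. ennreal (\<integral>i. gg \<epsilon> (step i x) \<partial>measure_pmf I) \<partial>measure_pmf (DD k))"
    by (intro nn_integral_cong nn_integral_eq_integral)
       (auto intro: integrable_measure_pmf_finite fI gg_nonneg)
  also have "\<dots> = ennreal (\<integral>x. (\<integral>i. gg \<epsilon> (step i x) \<partial>measure_pmf I) \<partial>measure_pmf (DD k))"
    by (rule nn_integral_eq_integral[OF integrable_measure_pmf_finite[OF finite_supp]])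
       (auto intro!: AE_pmfI gg_int_nonneg)
  finally show ?thesis
    by (subst (asm) ennreal_inj) (auto intro!: integral_nonneg_AE gg_int_nonneg simp: gg_nonneg)
qed

end

theorem theorem11:
  fixes n :: nat
    and blk :: "'N::finite \<Rightarrow> nat"
    and nrm :: "nat \<Rightarrow> real^'N \<Rightarrow> real"
    and f :: "real^'N \<Rightarrow> real"
    and grad :: "real^'N \<Rightarrow> real^'N"
    and L :: "nat \<Rightarrow> real"
    and I :: "nat pmf"
    and sharp :: "nat \<Rightarrow> real^'N \<Rightarrow> real^'N"
    and x0 :: "real^'N"
    and fstar \<epsilon> \<rho> :: real
    and k :: nat
  assumes blk_range: "\<forall>j. blk j < n"
    and blk_nonempty: "\<forall>i<n. \<exists>j. blk j = i"
    and norms: "\<forall>i<n. is_norm_on (block_space blk i) (nrm i)"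
    and convex: "convex_on UNIV f"
    and grad: "\<forall>x. (f has_derivative (\<lambda>h. grad x \<bullet> h)) (at x)"
    and L_pos: "\<forall>i<n. L i > 0"
    and lipschitz: "\<forall>i<n. \<forall>x. \<forall>t\<in>block_space blk i.
        dual_norm (block_space blk i) (nrm i)
          (block_proj blk i (grad (x + t)) - block_proj blk i (grad x))
        \<le> L i * nrm i t"
    and attains: "\<exists>xs. \<forall>y. f xs \<le> f y"
    and fstar: "fstar = (INF y. f y)"
    and support: "set_pmf I = {0..<n}"
    and sharp: "\<forall>i<n. \<forall>s\<in>block_space blk i.
        sharp i s \<in> block_space blk i \<and>
        (\<forall>t\<in>block_space blk i.
           - (s \<bullet> sharp i s) + (nrm i (sharp i s))\<^sup>2 / 2 \<le> - (s \<bullet> t) + (nrm i t)\<^sup>2 / 2)"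
    and R_finite: "bdd_above {wnorm n blk nrm (\<lambda>i. L i / pmf I i) (y - xs) | y xs.
                      f y \<le> f x0 \<and> (\<forall>z. f xs \<le> f z)}"
    and eps_pos: "0 < \<epsilon>"
    and eps_gap: "\<epsilon> < f x0 - fstar"
    and eps_R: "\<epsilon> < 2 * (level_radius n blk nrm (\<lambda>i. L i / pmf I i) f x0)\<^sup>2"
    and rho: "0 < \<rho>" "\<rho> < 1"
    and k_bound:
      "real k \<ge> 2 * (level_radius n blk nrm (\<lambda>i. L i / pmf I i) f x0)\<^sup>2 / \<epsilon> * (1 + ln (1 / \<rho>))
                 + 2 - 2 * (level_radius n blk nrm (\<lambda>i. L i / pmf I i) f x0)\<^sup>2 / (f x0 - fstar)
       \<or> real k \<ge> 2 * (level_radius n blk nrm (\<lambda>i. L i / pmf I i) f x0)\<^sup>2 / \<epsilon> * (1 + ln (1 / \<rho>)) - 2"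
  shows "measure_pmf.prob (rcds blk L sharp grad I x0 k) {x. f x - fstar \<le> \<epsilon>} \<ge> 1 - \<rho>"
proof -
  interpret rsetting n blk nrm f grad L I sharp x0 fstar
    by unfold_locales (use blk_range blk_nonempty norms convex grad L_pos lipschitz attains fstar support sharp R_finite in auto)
  let ?R = "level_radius n blk nrm (\<lambda>i. L i / pmf I i) f x0"
  define c where "c = 2 * ?R\<^sup>2"
  define \<xi>0 where "\<xi>0 = f x0 - fstar"
  obtain xs where xs: "\<forall>y. f xs \<le> f y" "fstar = f xs" using obtain_xs by blast
  have Rnn: "0 \<le> ?R" using wnorm_le_R[OF order.refl xs(1)] wnorm_nonneg by (meson order.trans)
  have "?R \<noteq> 0" using eps_R eps_pos by auto
  then have Rp: "?R > 0" using Rnn by simp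
  have cp: "c > 0" unfolding c_def using Rp by simp
  define \<theta> where "\<theta> k = (\<integral>x. gg \<epsilon> x \<partial>measure_pmf (DD k))" for k
  have intg: "integrable (measure_pmf (DD k)) h" for k and h :: "real^'N \<Rightarrow> real"
    by (rule integrable_measure_pmf_finite[OF finite_supp])
  have nn: "\<forall>k. 0 \<le> \<theta> k" unfolding \<theta>_def by (auto intro!: integral_nonneg_AE simp: gg_nonneg)
  have t0: "\<theta> 0 \<le> \<xi>0"
  proof -
    have "\<theta> 0 = (\<Sum>a\<in>{x0}. pmf (return_pmf x0) a *\<^sub>R gg \<epsilon> a)"
      unfolding \<theta>_def by (subst integral_measure_pmf[of "{x0}"]) auto
    also have "\<dots> = gg \<epsilon> x0" by simp
    finally show ?thesis using gg_le unfolding \<xi>0_def by simp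
  qed
  have inner: "\<forall>x\<in>set_pmf (DD k). (\<integral>i. gg \<epsilon> (step i x) \<partial>measure_pmf I) \<le> gg \<epsilon> x - (gg \<epsilon> x)\<^sup>2 / c
      \<and> (\<integral>i. gg \<epsilon> (step i x) \<partial>measure_pmf I) \<le> (1 - \<epsilon> / c) * gg \<epsilon> x" for k
    unfolding c_def inner_int using inner_bound[OF supp_level Rp eps_pos] by blast
  have r1: "\<forall>k. \<theta> (Suc k) \<le> \<theta> k - (\<theta> k)\<^sup>2 / c"
  proof
    fix k
    have "\<theta> (Suc k) \<le> (\<integral>x. gg \<epsilon> x - (gg \<epsilon> x)\<^sup>2 / c \<partial>measure_pmf (DD k))"
      unfolding \<theta>_def rec_eq
      by (rule integral_mono_AE[OF intg intg]) (use inner in \<open>auto intro!: AE_pmfI\<close>)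
    also have "\<dots> = \<theta> k - (\<integral>x. (gg \<epsilon> x)\<^sup>2 \<partial>measure_pmf (DD k)) / c"
      unfolding \<theta>_def by (subst Bochner_Integration.integral_diff[OF intg intg]) simp
    also have "\<dots> \<le> \<theta> k - (\<theta> k)\<^sup>2 / c"
    proof -
      have "0 \<le> (\<integral>x. (gg \<epsilon> x - \<theta> k)\<^sup>2 \<partial>measure_pmf (DD k))"
        by (rule integral_nonneg_AE) simp
      also have "\<dots> = (\<integral>x. (gg \<epsilon> x)\<^sup>2 \<partial>measure_pmf (DD k)) - (\<theta> k)\<^sup>2"
        unfolding \<theta>_def by (rule measure_pmf.variance_eq[OF intg intg])
      finally show ?thesis using cp by (simp add: divide_right_mono)
    qed
    finally show "\<theta> (Suc k) \<le> \<theta> k - (\<theta> k)\<^sup>2 / c" .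
  qed
  have r2: "\<forall>k. \<theta> (Suc k) \<le> (1 - \<epsilon> / c) * \<theta> k"
  proof
    fix k
    have "\<theta> (Suc k) \<le> (\<integral>x. (1 - \<epsilon> / c) * gg \<epsilon> x \<partial>measure_pmf (DD k))"
      unfolding \<theta>_def rec_eq
      by (rule integral_mono_AE[OF intg intg]) (use inner in \<open>auto intro!: AE_pmfI\<close>)
    also have "\<dots> = (1 - \<epsilon> / c) * \<theta> k" unfolding \<theta>_def by simp
    finally show "\<theta> (Suc k) \<le> (1 - \<epsilon> / c) * \<theta> k" .
  qed
  have x0p: "\<xi>0 > 0" using eps_pos eps_gap unfolding \<xi>0_def by simp
  have "\<xi>0 \<le> c / 4" using xi0_bound unfolding c_def \<xi>0_def by simp
  then have c4: "c / \<xi>0 \<ge> 4" using x0p by (simp add: field_simps)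
  have K: "real k \<ge> c / \<epsilon> * (1 + ln (1 / \<rho>)) + 2 - c / \<xi>0"
    using k_bound c4 unfolding c_def \<xi>0_def by auto
  have thK: "\<theta> k \<le> \<epsilon> * \<rho>"
    by (rule seq_bound[OF cp eps_pos _ _ nn t0 r1 r2 rho K])
       (use eps_gap eps_R in \<open>auto simp: \<xi>0_def c_def\<close>)
  have "measure (measure_pmf (DD k)) {x\<in>space (measure_pmf (DD k)). gg \<epsilon> x \<ge> \<epsilon>} \<le> \<theta> k / \<epsilon>"
    unfolding \<theta>_def
    by (rule integral_Markov_inequality_measure[OF intg, of UNIV]) (auto simp: gg_nonneg eps_pos)
  also have "\<dots> \<le> \<rho>" using thK eps_pos by (simp add: field_simps)
  finally have M: "measure_pmf.prob (DD k) {x. gg \<epsilon> x \<ge> \<epsilon>} \<le> \<rho>" by simp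
  have "measure_pmf.prob (DD k) (UNIV - {x. f x - fstar \<le> \<epsilon>}) \<le> measure_pmf.prob (DD k) {x. gg \<epsilon> x \<ge> \<epsilon>}"
  proof (rule measure_pmf.finite_measure_mono_AE)
    show "AE x in measure_pmf (DD k). x \<in> UNIV - {x. f x - fstar \<le> \<epsilon>} \<longrightarrow> x \<in> {x. \<epsilon> \<le> gg \<epsilon> x}"
      by (rule AE_pmfI) (use supp_level in \<open>auto simp: gg_def\<close>)
  qed simp
  moreover have "measure_pmf.prob (DD k) (UNIV - {x. f x - fstar \<le> \<epsilon>}) = 1 - measure_pmf.prob (DD k) {x. f x - fstar \<le> \<epsilon>}"
    using measure_pmf.prob_compl[of "{x. f x - fstar \<le> \<epsilon>}" "DD k"] by simp
  ultimately show ?thesis using M by simp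
qed

end
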